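(* Let $N\ge 1$, let $a\in\mathbb{R}^N$ with $a_i\neq 0$ for all $i$, and let $\underline x,\overline x,\underline y,\overline y\in\mathbb{R}^N$ with $\underline x<\overline x$ and $\underline y<\overline y$ componentwise. Let $$\mathcal{S}_a=\Big\{(x,y)\in\mathbb{R}^N\times\mathbb{R}^N:\ \sum_{i=1}^N a_ix_iy_i=0,\ \underline x\le x\le\overline x,\ \underline y\le y\le\overline y\Big\}.$$ Then $\operatorname{conv}(\mathcal{S}_a)$ is second-order cone representable.
   Context: A set $S\subseteq\mathbb{R}^n$ is second-order cone representable if it is the projection onto the first $n$ coordinates of a set $\{(x,u)\in\mathbb{R}^n\times\mathbb{R}^m\}$ defined by finitely many linear equalities/inequalities and constraints of the form $\|A_k(x,u)+b_k\|_2\le c_k^T(x,u)+d_k$. *)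

theory Defs
  imports "HOL-Analysis.Analysis"
begin

text \<open>An affine functional of the lifted variable (x,u), where x ranges over the
ambient Euclidean space and u over the auxiliary space R^m (u :: nat => real,
of which only the coordinates 0..m-1 are used).\<close>

definition aff_eval :: "nat \<Rightarrow> ('a::euclidean_space \<times> (nat \<Rightarrow> real) \<times> real) \<Rightarrow> 'a \<Rightarrow> (nat \<Rightarrow> real) \<Rightarrow> real" where
  "aff_eval m l x u = fst l \<bullet> x + (\<Sum>j<m. fst (snd l) j * u j) + snd (snd l)"

text \<open>Second-order cone representability: S is the projection onto x of a set of
pairs (x,u) with u in R^m, cut out by finitely many linear equalities, linear
inequalities, and second-order cone constraints  ||A_k(x,u)+b_k||_2 <= c_k^T(x,u)+d_k,
where the affine map A_k(x,u)+b_k is given by its list of component functionals.\<close>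

definition soc_representable :: "'a::euclidean_space set \<Rightarrow> bool" where
  "soc_representable S \<longleftrightarrow>
    (\<exists>(m::nat) (E :: ('a \<times> (nat \<Rightarrow> real) \<times> real) list)
        (I :: ('a \<times> (nat \<Rightarrow> real) \<times> real) list)
        (C :: (('a \<times> (nat \<Rightarrow> real) \<times> real) list \<times> ('a \<times> (nat \<Rightarrow> real) \<times> real)) list).
      S = {x. \<exists>u. (\<forall>e\<in>set E. aff_eval m e x u = 0)
                 \<and> (\<forall>g\<in>set I. aff_eval m g x u \<le> 0)
                 \<and> (\<forall>(rows, t)\<in>set C.
                       sqrt (\<Sum>r\<leftarrow>rows. (aff_eval m r x u)\<^sup>2) \<le> aff_eval m t x u)})"

end

theory Submission
  imports Defs "HOL-Analysis.Analysis"
begin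




datatype pk = Box real real real real | Arc real real real

fun pk_ineqs :: "pk \<Rightarrow> (real\<times>real\<times>real) list" where
  "pk_ineqs (Box s1 s2 t1 t2) = [(s1,-1,0),(-s2,1,0),(t1,0,-1),(-t2,0,1),(-1,0,0)]"
| "pk_ineqs (Arc k p q) = [(p,-1,0),(-q,1,0),(0,0,-1),(-(k*(p+q)),k,p*q),(-1,0,0)]"

fun pk_socs :: "pk \<Rightarrow> ((real\<times>real\<times>real) list \<times> (real\<times>real\<times>real)) list" where
  "pk_socs (Box _ _ _ _) = []"
| "pk_socs (Arc k p q) = [([(2 * sqrt k,0,0),(0,1,-1)], (0,1,1))]"

definition ev3 :: "real\<times>real\<times>real \<Rightarrow> real \<Rightarrow> real \<Rightarrow> real \<Rightarrow> real" where
  "ev3 c l s t = fst c * l + fst (snd c) * s + snd (snd c) * t"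

definition hom :: "pk \<Rightarrow> real \<Rightarrow> real \<Rightarrow> real \<Rightarrow> bool" where
  "hom pc l s t \<longleftrightarrow> (\<forall>c\<in>set (pk_ineqs pc). ev3 c l s t \<le> 0) \<and>
     (\<forall>(rows,r)\<in>set (pk_socs pc). sqrt (\<Sum>row\<leftarrow>rows. (ev3 row l s t)\<^sup>2) \<le> ev3 r l s t)"

fun cset :: "pk \<Rightarrow> (real\<times>real) set" where
  "cset (Box s1 s2 t1 t2) = {(s,t). s1 \<le> s \<and> s \<le> s2 \<and> t1 \<le> t \<and> t \<le> t2}"
| "cset (Arc k p q) = {(s,t). p \<le> s \<and> s \<le> q \<and> 0 \<le> t \<and> k \<le> s*t \<and> k* s + p*q*t \<le> k*(p+q)}"

fun valid :: "pk \<Rightarrow> bool" where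
  "valid (Box _ _ _ _) = True"
| "valid (Arc k p q) = (0<k \<and> 0<p \<and> p \<le> q)"

lemma hom_nonneg: "hom pc l s t \<Longrightarrow> l \<ge> 0"
  by (cases pc) (auto simp: hom_def ev3_def)

lemma hom_000: "hom pc 0 0 0"
  by (cases pc) (auto simp: hom_def ev3_def)

lemma hom_zero: "valid pc \<Longrightarrow> hom pc 0 s t \<Longrightarrow> s = 0 \<and> t = 0"
proof (cases pc)
  case (Arc k p q)
  assume v: "valid pc" and h: "hom pc 0 s t"
  then have "k>0" "p>0" "p\<le>q" "s = 0" "t\<ge>0" "p*q*t \<le> 0" using Arc by (auto simp: hom_def ev3_def)
  moreover have "p*q > 0" using \<open>p>0\<close> \<open>p\<le>q\<close> by simp
  ultimately show ?thesis by (smt (verit) mult_pos_pos zero_less_mult_iff)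
qed (auto simp: hom_def ev3_def)

lemma soc_arc:
  fixes l s t k :: real
  assumes "l > 0" "k > 0" "s \<ge> 0" "t \<ge> 0"
  shows "sqrt ((2 * sqrt k*l)\<^sup>2 + (s - t)\<^sup>2) \<le> s + t \<longleftrightarrow> k \<le> (s/l)*(t/l)"
proof -
  have "(2 * sqrt k*l)\<^sup>2 = 4*k*l^2" using assms by (simp add: power_mult_distrib)
  have "sqrt ((2 * sqrt k*l)\<^sup>2 + (s - t)\<^sup>2) \<le> s + t \<longleftrightarrow> (2 * sqrt k*l)\<^sup>2 + (s - t)\<^sup>2 \<le> (s+t)^2"
  proof -
    have "s + t = sqrt ((s+t)^2)" using assms by simp
    then show ?thesis by (metis real_sqrt_le_iff)
  qed
  also have "\<dots> \<longleftrightarrow> k*l^2 \<le> s*t" using \<open>(2 * sqrt k*l)\<^sup>2 = 4*k*l^2\<close> using assms by (simp add: power2_eq_square algebra_simps)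
  also have "\<dots> \<longleftrightarrow> k \<le> (s/l)*(t/l)" using assms by (simp add: field_simps power2_eq_square)
  finally show ?thesis .
qed

lemma hom_pos: "l > 0 \<Longrightarrow> valid pc \<Longrightarrow> hom pc l s t \<longleftrightarrow> (s/l, t/l) \<in> cset pc"
proof (cases pc)
  case (Box s1 s2 t1 t2)
  assume "l > 0"
  then show ?thesis using Box by (auto simp: hom_def ev3_def field_simps)
next
  case (Arc k p q)
  assume l: "l > 0" and v: "valid pc"
  then have kp: "k>0" "p>0" "p\<le>q" using Arc by auto
  have lin: "(\<forall>c\<in>set (pk_ineqs pc). ev3 c l s t \<le> 0) \<longleftrightarrow>
      p \<le> s/l \<and> s/l \<le> q \<and> 0 \<le> t/l \<and> k*(s/l) + p*q*(t/l) \<le> k*(p+q)"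
    using Arc l by (auto simp: ev3_def field_simps)
  show ?thesis
  proof
    assume h: "hom pc l s t"
    then have L: "p \<le> s/l \<and> s/l \<le> q \<and> 0 \<le> t/l \<and> k*(s/l) + p*q*(t/l) \<le> k*(p+q)"
      using lin by (simp add: hom_def)
    then have "s \<ge> 0" "t \<ge> 0" using l kp by (auto simp: field_simps intro: order.trans[OF mult_nonneg_nonneg[of l p]])
    moreover have "sqrt ((2 * sqrt k*l)\<^sup>2 + (s - t)\<^sup>2) \<le> s + t"
      using h Arc by (simp add: hom_def ev3_def)
    ultimately have "k \<le> (s/l)*(t/l)" using soc_arc[OF l kp(1)] by blast
    then show "(s/l, t/l) \<in> cset pc" using L Arc by simp
  next
    assume c: "(s/l, t/l) \<in> cset pc"
    then have L: "p \<le> s/l \<and> s/l \<le> q \<and> 0 \<le> t/l \<and> k*(s/l) + p*q*(t/l) \<le> k*(p+q)" and kk: "k \<le> (s/l)*(t/l)"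
      using Arc by auto
    then have "s \<ge> 0" "t \<ge> 0" using l kp by (auto simp: field_simps intro: order.trans[OF mult_nonneg_nonneg[of l p]])
    then have "sqrt ((2 * sqrt k*l)\<^sup>2 + (s - t)\<^sup>2) \<le> s + t" using soc_arc[OF l kp(1)] kk by blast
    then show "hom pc l s t" using L lin Arc by (simp add: hom_def ev3_def)
  qed
qed


definition lin3 :: "nat \<Rightarrow> real\<times>real\<times>real \<Rightarrow> nat \<Rightarrow> real" where
  "lin3 j c = (\<lambda>l. if l = 3*j then fst c else if l = 3*j+1 then fst (snd c) else if l = 3*j+2 then snd (snd c) else 0)"

lemma mod3_simps[simp]:
  fixes j :: nat
  shows "Suc (3*j) mod 3 = 1" "Suc (Suc (3*j)) mod 3 = 2" "Suc (3*j) div 3 = j" "Suc (Suc (3*j)) div 3 = j"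
    "(3*j) mod 3 = 0" "(3*j) div 3 = j"
  by presburger+

lemma sum_three: fixes P :: nat shows "(\<Sum>l<3*P. f l) = (\<Sum>j<P. f (3*j) + f (3*j+1) + f (3*j+2))"
proof (induction P)
  case (Suc P)
  have "{..<3 * Suc P} = {..<Suc (Suc (Suc (3*P)))}" by simp
  then show ?case by (simp only: sum.lessThan_Suc Suc.IH) (simp add: algebra_simps)
qed simp

lemma sum_lin3:
  assumes "j < P"
  shows "(\<Sum>l<3*P. lin3 j c l * u l) = ev3 c (u (3*j)) (u (3*j+1)) (u (3*j+2))"
proof -
  have "(\<Sum>l<3*P. lin3 j c l * u l) = (\<Sum>l<3*P. (if l = 3*j then fst c * u l else 0)
     + (if l = 3*j+1 then fst (snd c) * u l else 0) + (if l = 3*j+2 then snd (snd c) * u l else 0))"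
    by (rule sum.cong) (auto simp: lin3_def)
  also have "\<dots> = fst c * u (3*j) + fst (snd c) * u (3*j+1) + snd (snd c) * u (3*j+2)"
    using assms by (simp add: sum.distrib)
  finally show ?thesis by (simp add: ev3_def)
qed

lemma aff_lin3:
  fixes x :: "'a::euclidean_space"
  assumes "j < P"
  shows "aff_eval (3*P) (0, lin3 j c, 0) x u = ev3 c (u (3*j)) (u (3*j+1)) (u (3*j+2))"
  using sum_lin3[OF assms] by (simp add: aff_eval_def)

definition vv :: "'a \<times> 'a \<times> 'a \<times> pk \<Rightarrow> 'a" where "vv P = fst P"
definition ee :: "'a \<times> 'a \<times> 'a \<times> pk \<Rightarrow> 'a" where "ee P = fst (snd P)"
definition ee' :: "'a \<times> 'a \<times> 'a \<times> pk \<Rightarrow> 'a" where "ee' P = fst (snd (snd P))"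
definition kd :: "'a \<times> 'a \<times> 'a \<times> pk \<Rightarrow> pk" where "kd P = snd (snd (snd P))"

definition pmap :: "('a::real_vector) \<times> 'a \<times> 'a \<times> pk \<Rightarrow> real \<times> real \<Rightarrow> 'a" where
  "pmap P w = vv P + fst w *\<^sub>R ee P + snd w *\<^sub>R ee' P"

definition pset :: "('a::real_vector) \<times> 'a \<times> 'a \<times> pk \<Rightarrow> 'a set" where
  "pset P = pmap P ` cset (kd P)"

definition Wset :: "('a::real_vector \<times> 'a \<times> 'a \<times> pk) list \<Rightarrow> 'a set" where
  "Wset ps = {x. \<exists>l s t. (\<forall>j<length ps. hom (kd (ps!j)) (l j) (s j) (t j)) \<and> (\<Sum>j<length ps. l j) = 1
      \<and> x = (\<Sum>j<length ps. l j *\<^sub>R vv (ps!j) + s j *\<^sub>R ee (ps!j) + t j *\<^sub>R ee' (ps!j))}"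

definition coef :: "('a::real_inner) \<times> 'a \<times> 'a \<times> pk \<Rightarrow> 'a \<Rightarrow> nat \<Rightarrow> real" where
  "coef P b r = (if r = 0 then vv P \<bullet> b else if r = 1 then ee P \<bullet> b else ee' P \<bullet> b)"

lemma Wset_rep:
  fixes ps :: "('a::euclidean_space \<times> 'a \<times> 'a \<times> pk) list"
  shows "soc_representable (Wset ps)"
proof -
  define P where "P = length ps"
  obtain bl where bl: "set bl = (Basis :: 'a set)" using finite_list[OF finite_Basis] by blast
  define E :: "('a \<times> (nat \<Rightarrow> real) \<times> real) list" where
    "E = (0, \<lambda>l. if l mod 3 = 0 then 1 else 0, -1) #
         map (\<lambda>b. (b, \<lambda>l. - coef (ps!(l div 3)) b (l mod 3), 0)) bl"
  define I :: "('a \<times> (nat \<Rightarrow> real) \<times> real) list" where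
    "I = concat (map (\<lambda>j. map (\<lambda>c. (0, lin3 j c, 0)) (pk_ineqs (kd (ps!j)))) [0..<P])"
  define C :: "(('a \<times> (nat \<Rightarrow> real) \<times> real) list \<times> ('a \<times> (nat \<Rightarrow> real) \<times> real)) list" where
    "C = map (\<lambda>(j,p). (map (\<lambda>c. (0::'a, lin3 j c, 0::real)) (fst p), (0::'a, lin3 j (snd p), 0::real)))
          (concat (map (\<lambda>j. map (\<lambda>p. (j,p)) (pk_socs (kd (ps!j)))) [0..<P]))"
  define Q where "Q = (\<lambda>x (l::nat\<Rightarrow>real) (s::nat\<Rightarrow>real) (t::nat\<Rightarrow>real). (\<forall>j<P. hom (kd (ps!j)) (l j) (s j) (t j)) \<and> (\<Sum>j<P. l j) = 1
      \<and> x = (\<Sum>j<P. l j *\<^sub>R vv (ps!j) + s j *\<^sub>R ee (ps!j) + t j *\<^sub>R ee' (ps!j)))"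
  have key: "((\<forall>e\<in>set E. aff_eval (3*P) e x u = 0)
                 \<and> (\<forall>g\<in>set I. aff_eval (3*P) g x u \<le> 0)
                 \<and> (\<forall>(rows, t)\<in>set C.
                       sqrt (\<Sum>r\<leftarrow>rows. (aff_eval (3*P) r x u)\<^sup>2) \<le> aff_eval (3*P) t x u))
        \<longleftrightarrow> Q x (\<lambda>j. u (3*j)) (\<lambda>j. u (3*j+1)) (\<lambda>j. u (3*j+2))" for x u
  proof -
    have e1: "aff_eval (3*P) (0::'a, \<lambda>l. if l mod 3 = 0 then 1 else 0, -1) x u = (\<Sum>j<P. u (3*j)) - 1"
      by (simp add: aff_eval_def sum_three)
    have e2: "aff_eval (3*P) (b, \<lambda>l. - coef (ps!(l div 3)) b (l mod 3), 0) x u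
       = x \<bullet> b - (\<Sum>j<P. u (3*j) *\<^sub>R vv (ps!j) + u (3*j+1) *\<^sub>R ee (ps!j) + u (3*j+2) *\<^sub>R ee' (ps!j)) \<bullet> b" for b
    proof -
      have s1: "(\<Sum>l<3*P. coef (ps!(l div 3)) b (l mod 3) * u l) = (\<Sum>j<P. (u (3*j) * (vv (ps!j) \<bullet> b)
         + u (3*j+1) * (ee (ps!j) \<bullet> b) + u (3*j+2) * (ee' (ps!j) \<bullet> b)))"
        unfolding sum_three by (simp add: coef_def, simp add: mult.commute)
      have s2: "(\<Sum>j<P. u (3*j) *\<^sub>R vv (ps!j) + u (3*j+1) *\<^sub>R ee (ps!j) + u (3*j+2) *\<^sub>R ee' (ps!j)) \<bullet> b
         = (\<Sum>j<P. u (3*j) * (vv (ps!j) \<bullet> b) + u (3*j+1) * (ee (ps!j) \<bullet> b) + u (3*j+2) * (ee' (ps!j) \<bullet> b))"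
        by (simp add: inner_sum_left inner_add_left)
      show ?thesis unfolding aff_eval_def fst_conv snd_conv mult_minus_left sum_negf s1 s2 by (simp add: inner_commute)
    qed
    have E_iff: "(\<forall>e\<in>set E. aff_eval (3*P) e x u = 0) \<longleftrightarrow>
       (\<Sum>j<P. u (3*j)) = 1 \<and> x = (\<Sum>j<P. u (3*j) *\<^sub>R vv (ps!j) + u (3*j+1) *\<^sub>R ee (ps!j) + u (3*j+2) *\<^sub>R ee' (ps!j))"
      unfolding E_def using e1 e2 bl by (auto simp: euclidean_eq_iff[where 'a='a])
    have I_iff: "(\<forall>g\<in>set I. aff_eval (3*P) g x u \<le> 0) \<longleftrightarrow>
       (\<forall>j<P. \<forall>c\<in>set (pk_ineqs (kd (ps!j))). ev3 c (u (3*j)) (u (3*j+1)) (u (3*j+2)) \<le> 0)"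
      unfolding I_def by (auto simp: aff_lin3)
    have C_iff: "(\<forall>(rows, t)\<in>set C.
                       sqrt (\<Sum>r\<leftarrow>rows. (aff_eval (3*P) r x u)\<^sup>2) \<le> aff_eval (3*P) t x u) \<longleftrightarrow>
       (\<forall>j<P. \<forall>(rows,r)\<in>set (pk_socs (kd (ps!j))). sqrt (\<Sum>row\<leftarrow>rows. (ev3 row (u (3*j)) (u (3*j+1)) (u (3*j+2)))\<^sup>2)
            \<le> ev3 r (u (3*j)) (u (3*j+1)) (u (3*j+2)))"
    proof -
      have hs: "(\<Sum>r\<leftarrow>map (\<lambda>c. (0::'a, lin3 j c, 0::real)) rows. (aff_eval (3*P) r x u)\<^sup>2)
          = (\<Sum>row\<leftarrow>rows. (ev3 row (u (3*j)) (u (3*j+1)) (u (3*j+2)))\<^sup>2)"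
        if "j < P" for j rows
        using that by (induction rows) (simp_all add: aff_lin3)
      have hs2: "sum_list (map ((\<lambda>r. (aff_eval (3*P) r x u)\<^sup>2) \<circ> (\<lambda>c. (0::'a, lin3 j c, 0::real))) rows)
          = (\<Sum>row\<leftarrow>rows. (ev3 row (u (3*j)) (u (3*j+1)) (u (3*j+2)))\<^sup>2)"
        if "j < P" for j rows
        using hs[OF that, of rows] by (simp only: map_map)
      have memL: "z \<in> set (concat (map (\<lambda>j. map (\<lambda>p. (j,p)) (pk_socs (kd (ps!j)))) [0..<P]))
          \<longleftrightarrow> fst z < P \<and> snd z \<in> set (pk_socs (kd (ps!fst z)))" for z
        by (cases z) auto
      show ?thesis unfolding C_def set_map ball_simps by (auto simp: split_beta hs hs2 aff_lin3 memL)
    qed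
    show ?thesis unfolding E_iff I_iff C_iff Q_def hom_def split_beta by blast
  qed
  have "Wset ps = {x. \<exists>u. Q x (\<lambda>j. u (3*j)) (\<lambda>j. u (3*j+1)) (\<lambda>j. u (3*j+2))}"
  proof -
    have "(\<exists>l s t. Q x l s t) \<longleftrightarrow> (\<exists>u. Q x (\<lambda>j. u (3*j)) (\<lambda>j. u (3*j+1)) (\<lambda>j. u (3*j+2)))" for x
    proof
      assume "\<exists>l s t. Q x l s t"
      then obtain l s t where q: "Q x l s t" by blast
      define u where "u i = (if i mod 3 = 0 then l (i div 3) else if i mod 3 = 1 then s (i div 3) else t (i div 3))" for i
      have "(\<lambda>j. u (3*j)) = l" "(\<lambda>j. u (3*j+1)) = s" "(\<lambda>j. u (3*j+2)) = t" by (auto simp: u_def)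
      then show "\<exists>u. Q x (\<lambda>j. u (3*j)) (\<lambda>j. u (3*j+1)) (\<lambda>j. u (3*j+2))" using q by metis
    qed blast
    then show ?thesis unfolding Wset_def Q_def P_def by blast
  qed
  also have "\<dots> = {x. \<exists>u. (\<forall>e\<in>set E. aff_eval (3*P) e x u = 0)
                 \<and> (\<forall>g\<in>set I. aff_eval (3*P) g x u \<le> 0)
                 \<and> (\<forall>(rows, t)\<in>set C.
                       sqrt (\<Sum>r\<leftarrow>rows. (aff_eval (3*P) r x u)\<^sup>2) \<le> aff_eval (3*P) t x u)}"
    using key by blast
  finally show ?thesis unfolding soc_representable_def by blast
qed


lemma pmap_comb:
  fixes u v :: real
  assumes "u + v = 1"
  shows "u *\<^sub>R pmap P w1 + v *\<^sub>R pmap P w2 = pmap P (u *\<^sub>R w1 + v *\<^sub>R w2)"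
proof -
  have vv: "u *\<^sub>R vv P + v *\<^sub>R vv P = vv P" using assms by (metis scaleR_add_left scaleR_one)
  have "u *\<^sub>R pmap P w1 + v *\<^sub>R pmap P w2 = (u *\<^sub>R vv P + v *\<^sub>R vv P) + (u * fst w1 + v * fst w2) *\<^sub>R ee P
     + (u * snd w1 + v * snd w2) *\<^sub>R ee' P" by (simp add: pmap_def algebra_simps)
  also have "\<dots> = pmap P (u *\<^sub>R w1 + v *\<^sub>R w2)" unfolding vv by (simp add: pmap_def)
  finally show ?thesis .
qed

lemma convex_pset: "convex (cset (kd P)) \<Longrightarrow> convex (pset P)"
  unfolding pset_def
proof (rule convexI)
  fix x y and u v :: real assume c: "convex (cset (kd P))" and x: "x \<in> pmap P ` cset (kd P)" and y: "y \<in> pmap P ` cset (kd P)"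
    and uv: "0 \<le> u" "0 \<le> v" "u + v = 1"
  from x y obtain w1 w2 where "w1 \<in> cset (kd P)" "w2 \<in> cset (kd P)" "x = pmap P w1" "y = pmap P w2" by blast
  moreover have "u *\<^sub>R w1 + v *\<^sub>R w2 \<in> cset (kd P)" using convexD[OF c _ _ uv] calculation by blast
  ultimately show "u *\<^sub>R x + v *\<^sub>R y \<in> pmap P ` cset (kd P)"
    using pmap_comb[OF uv(3), of P w1 w2] by simp
qed

lemma W_eq:
  fixes ps :: "('a::real_vector \<times> 'a \<times> 'a \<times> pk) list"
  assumes A: "\<forall>P\<in>set ps. valid (kd P) \<and> convex (cset (kd P)) \<and> cset (kd P) \<noteq> {}"
  shows "Wset ps = convex hull (\<Union>P\<in>set ps. pset P)"
proof -
  define I where "I = {..<length ps}"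
  define S where "S j = pset (ps!j)" for j
  have U: "(\<Union>P\<in>set ps. pset P) = \<Union>(S ` I)"
  proof -
    have "set ps = (\<lambda>j. ps!j) ` I" by (auto simp: I_def in_set_conv_nth image_iff; metis lessThan_iff)
    then show ?thesis unfolding S_def by (simp add: image_image)
  qed
  have A': "valid (kd (ps!j)) \<and> convex (cset (kd (ps!j))) \<and> cset (kd (ps!j)) \<noteq> {}" if "j \<in> I" for j
    using A that unfolding I_def by auto
  have cv: "\<forall>i\<in>I. convex (S i) \<and> S i \<noteq> {}"
    using A' convex_pset unfolding S_def pset_def by blast
  have H: "convex hull (\<Union>(S ` I)) =
    {sum (\<lambda>i. c i *\<^sub>R s i) I | c s. (\<forall>i\<in>I. c i \<ge> 0) \<and> sum c I = 1 \<and> (\<forall>i\<in>I. s i \<in> S i)}"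
    by (rule convex_hull_finite_union) (auto simp: I_def cv)
  have "Wset ps = {sum (\<lambda>i. c i *\<^sub>R s i) I | c s. (\<forall>i\<in>I. c i \<ge> 0) \<and> sum c I = 1 \<and> (\<forall>i\<in>I. s i \<in> S i)}"
  proof (rule set_eqI, rule iffI)
    fix x assume "x \<in> Wset ps"
    then obtain l s t where h: "\<forall>j<length ps. hom (kd (ps!j)) (l j) (s j) (t j)" and l1: "(\<Sum>j<length ps. l j) = 1"
      and x: "x = (\<Sum>j<length ps. l j *\<^sub>R vv (ps!j) + s j *\<^sub>R ee (ps!j) + t j *\<^sub>R ee' (ps!j))"
      unfolding Wset_def by blast
    define w where "w j = (if l j > 0 then (s j / l j, t j / l j) else (SOME z. z \<in> cset (kd (ps!j))))" for j
    define sp where "sp j = pmap (ps!j) (w j)" for j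
    have l0: "l j \<ge> 0" if "j \<in> I" for j using h that hom_nonneg unfolding I_def by blast
    have spS: "sp j \<in> S j" if "j \<in> I" for j
    proof (cases "l j > 0")
      case True
      then have "w j \<in> cset (kd (ps!j))" using hom_pos[OF True] A' that h unfolding w_def I_def by auto
      then show ?thesis unfolding sp_def S_def pset_def by blast
    next
      case False
      then have "w j \<in> cset (kd (ps!j))" using A'[OF that] unfolding w_def by (simp add: some_in_eq)
      then show ?thesis unfolding sp_def S_def pset_def by blast
    qed
    have eq: "l j *\<^sub>R sp j = l j *\<^sub>R vv (ps!j) + s j *\<^sub>R ee (ps!j) + t j *\<^sub>R ee' (ps!j)" if "j \<in> I" for j
    proof (cases "l j > 0")
      case True
      then show ?thesis unfolding sp_def w_def pmap_def by (simp add: algebra_simps)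
    next
      case False
      then have "l j = 0" using l0[OF that] by simp
      moreover have "hom (kd (ps!j)) (l j) (s j) (t j)" using h that unfolding I_def by simp
      ultimately have "s j = 0 \<and> t j = 0" using hom_zero[OF conjunct1[OF A'[OF that]]] by simp
      then show ?thesis using \<open>l j = 0\<close> by simp
    qed
    have "x = sum (\<lambda>i. l i *\<^sub>R sp i) I" unfolding x I_def by (rule sum.cong) (use eq I_def in auto)
    then show "x \<in> {sum (\<lambda>i. c i *\<^sub>R s i) I | c s. (\<forall>i\<in>I. c i \<ge> 0) \<and> sum c I = 1 \<and> (\<forall>i\<in>I. s i \<in> S i)}"
      using l0 spS l1 unfolding I_def by blast
  next
    fix x assume "x \<in> {sum (\<lambda>i. c i *\<^sub>R s i) I | c s. (\<forall>i\<in>I. c i \<ge> 0) \<and> sum c I = 1 \<and> (\<forall>i\<in>I. s i \<in> S i)}"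
    then obtain c sp where c0: "\<forall>i\<in>I. c i \<ge> 0" and c1: "sum c I = 1" and sS: "\<forall>i\<in>I. sp i \<in> S i"
      and x: "x = sum (\<lambda>i. c i *\<^sub>R sp i) I" by blast
    have "\<forall>i\<in>I. \<exists>w. w \<in> cset (kd (ps!i)) \<and> sp i = pmap (ps!i) w" using sS unfolding S_def pset_def by blast
    then obtain w where w: "\<forall>i\<in>I. w i \<in> cset (kd (ps!i)) \<and> sp i = pmap (ps!i) (w i)" by metis
    define s where "s j = c j * fst (w j)" for j
    define t where "t j = c j * snd (w j)" for j
    have h: "hom (kd (ps!j)) (c j) (s j) (t j)" if "j < length ps" for j
    proof -
      have jI: "j \<in> I" using that I_def by simp
      show ?thesis
      proof (cases "c j > 0")
        case True
        have "(s j / c j, t j / c j) = w j" using True unfolding s_def t_def by simp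
        then show ?thesis using hom_pos[OF True] A'[OF jI] w jI by auto
      next
        case False
        then have "c j = 0" using c0 jI by force
        then show ?thesis unfolding s_def t_def using hom_000 by simp
      qed
    qed
    have "x = (\<Sum>j<length ps. c j *\<^sub>R vv (ps!j) + s j *\<^sub>R ee (ps!j) + t j *\<^sub>R ee' (ps!j))"
      unfolding x I_def using w unfolding I_def
      by (intro sum.cong) (auto simp: pmap_def s_def t_def algebra_simps)
    then show "x \<in> Wset ps" unfolding Wset_def using h c1 unfolding I_def by blast
  qed
  then show ?thesis using H U by simp
qed



lemma in_hull_seg:
  assumes "a \<in> convex hull H" "b \<in> convex hull H" "x \<in> closed_segment a b"
  shows "x \<in> convex hull H"
  using closed_segment_subset[OF assms(1,2) convex_convex_hull] assms(3) by blast

lemma seg_vert: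
  fixes s t t0 t1 :: real
  assumes "t0 \<le> t" "t \<le> t1"
  shows "(s,t) \<in> closed_segment (s,t0) (s,t1)"
proof (cases "t0 = t1")
  case True then show ?thesis using assms by simp
next
  case False
  then have d: "t1 - t0 > 0" using assms by simp
  define u where "u = (t - t0)/(t1 - t0)"
  have "0 \<le> u" "u \<le> 1" using assms d by (auto simp: u_def field_simps)
  moreover have "(s,t) = (1 - u) *\<^sub>R (s,t0) + u *\<^sub>R (s,t1)"
  proof -
    have e0: "u*(t1-t0) = t - t0" using d by (simp add: u_def)
    have e: "(1-u)*t0 + u*t1 = t" using e0 by (simp add: algebra_simps)
    have e2: "(1-u)* s + u* s = s" by (simp add: algebra_simps)
    show ?thesis using e e2 by simp
  qed
  ultimately show ?thesis unfolding in_segment by blast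
qed

lemma arc_hull:
  fixes k p q s t :: real
  assumes kp: "0 < k" "0 < p" "p \<le> q"
    and st: "p \<le> s" "s \<le> q" "0 \<le> t" "k \<le> s*t" "k* s + p*q*t \<le> k*(p+q)"
  shows "(s,t) \<in> convex hull {(z, k/z) | z. p \<le> z \<and> z \<le> q}"
proof -
  let ?H = "{(z, k/z) | z. p \<le> z \<and> z \<le> q}"
  have inH: "(z, k/z) \<in> convex hull ?H" if "p \<le> z" "z \<le> q" for z
    using that by (intro hull_inc) blast
  have s0: "s > 0" using kp st by simp
  define tc where "tc = k*(p+q-s)/(p*q)"
  have pq: "p*q > 0" using kp by simp
  have t1: "t \<le> tc" unfolding tc_def using st pq by (simp add: field_simps)
  have t0: "k/s \<le> t" using st s0 by (simp add: field_simps)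
  have C: "(s, tc) \<in> convex hull ?H"
  proof (cases "p = q")
    case True
    then have "s = p" using st by simp
    then have "tc = k/s" unfolding tc_def using True kp by (simp add: field_simps power2_eq_square)
    then show ?thesis using inH st by simp
  next
    case False
    then have d: "q - p > 0" using kp by simp
    define u where "u = (s-p)/(q-p)"
    have "0 \<le> u" "u \<le> 1" using st d by (auto simp: u_def field_simps)
    moreover have "(s,tc) = (1 - u) *\<^sub>R (p, k/p) + u *\<^sub>R (q, k/q)"
    proof -
      have e0: "u*(q-p) = s - p" using d by (simp add: u_def)
      have "s = (1-u)*p + u*q" using e0 by (simp add: algebra_simps)
      moreover have "tc = (1-u)*(k/p) + u*(k/q)"
      proof -
        have "(1-u)*(k/p) + u*(k/q) = k/p - (u*(q-p))*k/(p*q)" using kp by (simp add: field_simps)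
        also have "\<dots> = k/p - (s-p)*k/(p*q)" using e0 by simp
        also have "\<dots> = tc" unfolding tc_def using kp by (simp add: field_simps)
        finally show ?thesis by simp
      qed
      ultimately show ?thesis by simp
    qed
    ultimately have "(s,tc) \<in> closed_segment (p, k/p) (q, k/q)" unfolding in_segment by blast
    then show ?thesis using in_hull_seg inH kp by (meson order_refl)
  qed
  have "(s, k/s) \<in> convex hull ?H" using inH st by simp
  then show ?thesis using in_hull_seg[OF _ C seg_vert[OF t0 t1]] by blast
qed



definition Sset :: "real^'n \<Rightarrow> real^'n \<Rightarrow> real^'n \<Rightarrow> real^'n \<Rightarrow> real^'n \<Rightarrow> ((real^'n) \<times> (real^'n)) set" where
  "Sset a xl xu yl yu = {(x :: real ^ 'n, y :: real ^ 'n).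
              (\<Sum>i\<in>UNIV. a $ i * x $ i * y $ i) = 0
              \<and> (\<forall>i. xl $ i \<le> x $ i \<and> x $ i \<le> xu $ i)
              \<and> (\<forall>i. yl $ i \<le> y $ i \<and> y $ i \<le> yu $ i)}"

definition freev :: "real^'n \<Rightarrow> real^'n \<Rightarrow> real^'n \<Rightarrow> real^'n \<Rightarrow> real^'n \<Rightarrow> real^'n \<Rightarrow> 'n \<Rightarrow> bool \<Rightarrow> bool" where
  "freev xl xu yl yu X Y l b = (if b then yl$l < Y$l \<and> Y$l < yu$l else xl$l < X$l \<and> X$l < xu$l)"

definition gap :: "real^'n \<Rightarrow> real^'n \<Rightarrow> real^'n \<Rightarrow> real^'n \<Rightarrow> real^'n \<Rightarrow> real^'n \<Rightarrow> 'n \<Rightarrow> bool \<Rightarrow> real" where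
  "gap xl xu yl yu X Y l b = (if b then min (Y$l - yl$l) (yu$l - Y$l) else min (X$l - xl$l) (xu$l - X$l))"

lemma no_two_free:
  fixes a xl xu yl yu X Y :: "real^'n"
  assumes inS: "(X,Y) \<in> Sset a xl xu yl yu"
    and ext: "(X,Y) extreme_point_of convex hull (Sset a xl xu yl yu)"
    and l12: "l1 \<noteq> l2"
    and f1: "freev xl xu yl yu X Y l1 b1" and f2: "freev xl xu yl yu X Y l2 b2"
  shows False
proof -
  define G1 where "G1 = a$l1 * (if b1 then X$l1 else Y$l1)"
  define G2 where "G2 = a$l2 * (if b2 then X$l2 else Y$l2)"
  define \<alpha> where "\<alpha> = (if G1 = 0 \<and> G2 = 0 then 1 else G2)"
  define \<beta> where "\<beta> = (if G1 = 0 \<and> G2 = 0 then 0 else - G1)"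
  have ab0: "\<alpha> \<noteq> 0 \<or> \<beta> \<noteq> 0" unfolding \<alpha>_def \<beta>_def by auto
  have Lz: "\<alpha> * G1 + \<beta> * G2 = 0" unfolding \<alpha>_def \<beta>_def by auto
  define dX :: "real^'n" where "dX = (\<chi> m. (if m = l1 \<and> \<not> b1 then \<alpha> else 0) + (if m = l2 \<and> \<not> b2 then \<beta> else 0))"
  define dY :: "real^'n" where "dY = (\<chi> m. (if m = l1 \<and> b1 then \<alpha> else 0) + (if m = l2 \<and> b2 then \<beta> else 0))"
  define g1 where "g1 = gap xl xu yl yu X Y l1 b1"
  define g2 where "g2 = gap xl xu yl yu X Y l2 b2"
  have g1p: "g1 > 0" using f1 unfolding g1_def gap_def freev_def by (auto split: if_splits)
  have g2p: "g2 > 0" using f2 unfolding g2_def gap_def freev_def by (auto split: if_splits)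
  define \<epsilon> where "\<epsilon> = min (g1/(\<bar>\<alpha>\<bar>+1)) (g2/(\<bar>\<beta>\<bar>+1))"
  have ep: "\<epsilon> > 0" unfolding \<epsilon>_def using g1p g2p by simp
  have ea: "\<epsilon> * \<bar>\<alpha>\<bar> < g1"
  proof -
    have "\<epsilon> * \<bar>\<alpha>\<bar> \<le> g1/(\<bar>\<alpha>\<bar>+1) * \<bar>\<alpha>\<bar>" by (rule mult_right_mono) (auto simp: \<epsilon>_def)
    also have "\<dots> < g1" using g1p by (simp add: field_simps)
    finally show ?thesis .
  qed
  have eb: "\<epsilon> * \<bar>\<beta>\<bar> < g2"
  proof -
    have "\<epsilon> * \<bar>\<beta>\<bar> \<le> g2/(\<bar>\<beta>\<bar>+1) * \<bar>\<beta>\<bar>" by (rule mult_right_mono) (auto simp: \<epsilon>_def)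
    also have "\<dots> < g2" using g2p by (simp add: field_simps)
    finally show ?thesis .
  qed
  have prod0: "dX$m * dY$m = 0" for m unfolding dX_def dY_def using l12 by auto
  have Lsum: "(\<Sum>m\<in>UNIV. a$m * (X$m * dY$m + dX$m * Y$m)) = \<alpha> * G1 + \<beta> * G2"
  proof -
    have "(\<Sum>m\<in>UNIV. a$m * (X$m * dY$m + dX$m * Y$m)) =
       (\<Sum>m\<in>UNIV. (if m = l1 then \<alpha> * G1 else 0) + (if m = l2 then \<beta> * G2 else 0))"
      by (rule sum.cong) (auto simp: dX_def dY_def G1_def G2_def l12 algebra_simps)
    also have "\<dots> = \<alpha> * G1 + \<beta> * G2" by (simp add: sum.distrib)
    finally show ?thesis .
  qed
  have pert: "(X + c *\<^sub>R dX, Y + c *\<^sub>R dY) \<in> Sset a xl xu yl yu" if c: "\<bar>c\<bar> \<le> \<epsilon>" for c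
  proof -
    have "(\<Sum>m\<in>UNIV. a$m * (X + c *\<^sub>R dX)$m * (Y + c *\<^sub>R dY)$m)
       = (\<Sum>m\<in>UNIV. a$m * X$m * Y$m) + c * (\<Sum>m\<in>UNIV. a$m * (X$m * dY$m + dX$m * Y$m))
         + c^2 * (\<Sum>m\<in>UNIV. a$m * (dX$m * dY$m))"
      by (simp add: sum.distrib sum_distrib_left algebra_simps power2_eq_square)
    also have "\<dots> = 0" using inS Lsum Lz by (simp add: Sset_def prod0)
    finally have sum0: "(\<Sum>m\<in>UNIV. a$m * (X + c *\<^sub>R dX)$m * (Y + c *\<^sub>R dY)$m) = 0" .
    have cab: "\<bar>c * \<alpha>\<bar> < g1" "\<bar>c * \<beta>\<bar> < g2"
      using ea eb c by (auto simp: abs_mult intro: le_less_trans[OF mult_right_mono])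
    have bX: "xl$m \<le> (X + c *\<^sub>R dX)$m \<and> (X + c *\<^sub>R dX)$m \<le> xu$m" for m
    proof -
      have b0: "xl$m \<le> X$m \<and> X$m \<le> xu$m" using inS by (simp add: Sset_def)
      show ?thesis
      proof (cases "m = l1 \<and> \<not> b1")
        case True
        then have "m \<noteq> l2" using l12 by auto
        then show ?thesis using True cab(1) unfolding g1_def gap_def dX_def by auto
      next
        case F1: False
        show ?thesis
        proof (cases "m = l2 \<and> \<not> b2")
          case True
          then show ?thesis using F1 True cab(2) unfolding g2_def gap_def dX_def by auto
        next
          case False
          then show ?thesis using F1 b0 unfolding dX_def by auto
        qed
      qed
    qed
    have bY: "yl$m \<le> (Y + c *\<^sub>R dY)$m \<and> (Y + c *\<^sub>R dY)$m \<le> yu$m" for m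
    proof -
      have b0: "yl$m \<le> Y$m \<and> Y$m \<le> yu$m" using inS by (simp add: Sset_def)
      show ?thesis
      proof (cases "m = l1 \<and> b1")
        case True
        then have "m \<noteq> l2" using l12 by auto
        then show ?thesis using True cab(1) unfolding g1_def gap_def dY_def by auto
      next
        case F1: False
        show ?thesis
        proof (cases "m = l2 \<and> b2")
          case True
          then show ?thesis using F1 True cab(2) unfolding g2_def gap_def dY_def by auto
        next
          case False
          then show ?thesis using F1 b0 unfolding dY_def by auto
        qed
      qed
    qed
    show ?thesis unfolding Sset_def using sum0 bX bY by simp
  qed
  define xp where "xp = (X + \<epsilon> *\<^sub>R dX, Y + \<epsilon> *\<^sub>R dY)"
  define xm where "xm = (X + (-\<epsilon>) *\<^sub>R dX, Y + (-\<epsilon>) *\<^sub>R dY)"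
  have inp: "xp \<in> convex hull (Sset a xl xu yl yu)" unfolding xp_def using pert[of \<epsilon>] ep
    by (intro hull_inc) simp
  have inm: "xm \<in> convex hull (Sset a xl xu yl yu)" unfolding xm_def using pert[of "-\<epsilon>"] ep
    by (intro hull_inc) simp
  have d0: "dX \<noteq> 0 \<or> dY \<noteq> 0"
  proof -
    have "dX$l1 \<noteq> 0 \<or> dY$l1 \<noteq> 0 \<or> dX$l2 \<noteq> 0 \<or> dY$l2 \<noteq> 0"
      using ab0 l12 unfolding dX_def dY_def by (cases b1; cases b2) auto
    then show ?thesis by auto
  qed
  have neq: "xp \<noteq> xm"
  proof
    assume "xp = xm"
    then have e1: "\<epsilon> *\<^sub>R dX = (-\<epsilon>) *\<^sub>R dX" and e2: "\<epsilon> *\<^sub>R dY = (-\<epsilon>) *\<^sub>R dY" unfolding xp_def xm_def by auto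
    have "\<epsilon> * dX$m = (-\<epsilon>) * dX$m" "\<epsilon> * dY$m = (-\<epsilon>) * dY$m" for m
      using arg_cong[OF e1, of "\<lambda>v. v$m"] arg_cong[OF e2, of "\<lambda>v. v$m"] by simp_all
    then have "dX$m = 0" "dY$m = 0" for m using ep by (simp_all add: algebra_simps)
    then have "dX = 0" "dY = 0" by (simp_all add: vec_eq_iff)
    then show False using d0 by simp
  qed
  have mid: "midpoint xp xm = (X,Y)" unfolding midpoint_def xp_def xm_def by (simp add: vec_eq_iff)
  then have "(X,Y) \<in> open_segment xp xm" using neq midpoint_in_open_segment by metis
  then show False using ext inp inm unfolding extreme_point_of_def by blast
qed



lemma amgm2:
  fixes x y k :: real
  assumes "0 \<le> x" "0 \<le> y" "k*k \<le> x*y" "0 \<le> k"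
  shows "2*k \<le> x + y"
proof (rule ccontr)
  assume "\<not> 2*k \<le> x + y"
  then have "x + y < 2*k" by simp
  then have "(x+y)*(x+y) < (2*k)*(2*k)" using assms by (intro mult_strict_mono) auto
  moreover have "4*(x*y) \<le> (x+y)*(x+y)"
  proof -
    have "(x+y)*(x+y) - 4*(x*y) = (x-y)*(x-y)" by (simp add: algebra_simps)
    then show ?thesis by (metis diff_ge_0_iff_ge zero_le_square)
  qed
  ultimately show False using assms by linarith
qed

lemma convex_arc:
  assumes r2: "valid (Arc k p q)"
  shows "convex (cset (Arc k p q))"
proof (rule convexI)
  fix x y and r1 r2 :: real
  assume x: "x \<in> cset (Arc k p q)" and y: "y \<in> cset (Arc k p q)"
    and uv: "0 \<le> r1" "0 \<le> r2" "r1 + r2 = 1"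
  obtain s1 t1 s2 t2 where xy: "x = (s1,t1)" "y = (s2,t2)" by (meson prod.exhaust)
  have h: "p \<le> s1" "s1 \<le> q" "0 \<le> t1" "k \<le> s1*t1" "k * s1 + p*q*t1 \<le> k*(p+q)"
     "p \<le> s2" "s2 \<le> q" "0 \<le> t2" "k \<le> s2*t2" "k * s2 + p*q*t2 \<le> k*(p+q)" using x y xy by auto
  have kp: "0 < k" "0 < p" "p \<le> q" using r2 by auto
  have s0: "0 \<le> s1" "0 \<le> s2" using h kp by linarith+
  let ?s = "r1* s1 + r2 * s2" and ?t = "r1*t1 + r2 *t2"
  have c1: "p \<le> ?s" "?s \<le> q"
  proof -
    have "p = r1*p + r2 *p" using uv by (metis distrib_right mult_1)
    then show "p \<le> ?s" using h uv by (smt (verit) mult_left_mono)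
    have "q = r1*q + r2 *q" using uv by (metis distrib_right mult_1)
    then show "?s \<le> q" using h uv by (smt (verit) mult_left_mono)
  qed
  have c2: "0 \<le> ?t" using h uv by simp
  have c3: "k * ?s + p*q*?t \<le> k*(p+q)"
  proof -
    have "k * ?s + p*q*?t = r1*(k * s1 + p*q*t1) + r2 *(k * s2 + p*q*t2)" by (simp add: algebra_simps)
    also have "\<dots> \<le> r1*(k*(p+q)) + r2 *(k*(p+q))" using h uv by (intro add_mono mult_left_mono) auto
    also have "\<dots> = k*(p+q)" using uv by (metis distrib_right mult_1)
    finally show ?thesis .
  qed
  have c4: "k \<le> ?s * ?t"
  proof -
    have m: "2*k \<le> s1*t2 + s2*t1"
    proof (rule amgm2)
      show "0 \<le> s1*t2" "0 \<le> s2*t1" using s0 h by auto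
      have "k*k \<le> (s1*t1)*(s2*t2)" using h kp by (intro mult_mono) auto
      then show "k*k \<le> s1*t2*(s2*t1)" by (simp add: algebra_simps)
      show "0 \<le> k" using kp by simp
    qed
    have e1: "?s * ?t = r1*r1*(s1*t1) + r2 *r2 *(s2*t2) + r1*r2 *(s1*t2 + s2*t1)" by (simp add: algebra_simps)
    have uu: "0 \<le> r1*r1" "0 \<le> r2 *r2" "0 \<le> r1*r2" using uv by auto
    have e2: "r1*r1*k \<le> r1*r1*(s1*t1)" "r2 *r2 *k \<le> r2 *r2 *(s2*t2)" "r1*r2 *(2*k) \<le> r1*r2 *(s1*t2 + s2*t1)"
      using mult_left_mono[OF h(4) uu(1)] mult_left_mono[OF h(9) uu(2)] mult_left_mono[OF m uu(3)] by auto
    have e3: "r1*r1*k + r2 *r2 *k + r1*r2 *(2*k) = (r1+r2)*(r1+r2)*k" by (simp add: algebra_simps)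
    have e4: "(r1+r2)*(r1+r2)*k = k" using uv by simp
    show ?thesis using e1 e2 e3 e4 by linarith
  qed
  have eq: "r1 *\<^sub>R x + r2 *\<^sub>R y = (?s, ?t)" using xy by simp
  have mem: "(?s, ?t) \<in> cset (Arc k p q)" using c1 c2 c3 c4 by simp
  show "r1 *\<^sub>R x + r2 *\<^sub>R y \<in> cset (Arc k p q)" unfolding eq by (rule mem)
qed

lemma convex_cset: "valid pc \<Longrightarrow> convex (cset pc)"
proof (cases pc)
  case (Box s1 s2 t1 t2)
  have "cset pc = {s1..s2} \<times> {t1..t2}" using Box by auto
  then show ?thesis by (simp add: convex_Times)
next
  case (Arc k p q)
  then show "valid pc \<Longrightarrow> ?thesis" using convex_arc by simp
qed

definition arcp :: "'a \<Rightarrow> 'a \<Rightarrow> 'a \<Rightarrow> real \<Rightarrow> real \<Rightarrow> real \<Rightarrow> real \<Rightarrow> real \<Rightarrow> ('a \<times> 'a \<times> 'a \<times> pk) list" where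
  "arcp v e e' k l1 h1 l2 h2 = (let p = max l1 (k/h2); q = (if l2 > 0 then min h1 (k/l2) else h1) in
      if 0 < k \<and> 0 < h2 \<and> p \<le> q then [(v,e,e',Arc k p q)] else [])"

lemma arcp_valid: "P \<in> set (arcp v e e' k l1 h1 l2 h2) \<Longrightarrow> valid (kd P)"
  unfolding arcp_def Let_def by (auto simp: kd_def less_max_iff_disj intro: divide_pos_pos split: if_splits)

lemma arcp_sub:
  fixes K :: "'a::real_vector set"
  assumes P: "P \<in> set (arcp v e e' k l1 h1 l2 h2)" and K: "convex K"
    and pts: "\<And>z w. l1 \<le> z \<Longrightarrow> z \<le> h1 \<Longrightarrow> l2 \<le> w \<Longrightarrow> w \<le> h2 \<Longrightarrow> z*w = k \<Longrightarrow> v + z *\<^sub>R e + w *\<^sub>R e' \<in> K"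
  shows "pset P \<subseteq> K"
proof -
  define p where "p = max l1 (k/h2)"
  define q where "q = (if l2 > 0 then min h1 (k/l2) else h1)"
  have c: "0 < k" "0 < h2" "p \<le> q" and Pe: "P = (v,e,e',Arc k p q)"
    using P unfolding arcp_def Let_def p_def q_def by (auto split: if_splits)
  have p0: "0 < p" unfolding p_def using c by (simp add: max.strict_coboundedI2)
  let ?H = "{(z, k/z) | z. p \<le> z \<and> z \<le> q}"
  have HK: "?H \<subseteq> {w. pmap P w \<in> K}"
  proof
    fix y assume "y \<in> ?H"
    then obtain z where y: "y = (z, k/z)" "p \<le> z" "z \<le> q" by blast
    have z0: "z > 0" using y p0 by simp
    have "l1 \<le> z" using y unfolding p_def by simp
    moreover have "z \<le> h1" using y unfolding q_def by (auto split: if_splits)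
    moreover have "k/z \<le> h2"
    proof -
      have "k/h2 \<le> z" using y unfolding p_def by simp
      then show ?thesis using c z0 by (simp add: field_simps)
    qed
    moreover have "l2 \<le> k/z"
    proof (cases "l2 > 0")
      case True
      then have "z \<le> k/l2" using y unfolding q_def by simp
      then show ?thesis using True z0 c by (simp add: field_simps)
    next
      case False
      then show ?thesis using c z0 by (smt (verit) divide_pos_pos)
    qed
    moreover have "z * (k/z) = k" using z0 by simp
    ultimately have "v + z *\<^sub>R e + (k/z) *\<^sub>R e' \<in> K" using pts by blast
    then show "y \<in> {w. pmap P w \<in> K}" using y Pe by (simp add: pmap_def vv_def ee_def ee'_def)
  qed
  have cvx: "convex {w. pmap P w \<in> K}"
  proof (rule convexI)
    fix x y and u v :: real assume "x \<in> {w. pmap P w \<in> K}" "y \<in> {w. pmap P w \<in> K}" "0 \<le> u" "0 \<le> v" "u + v = 1"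
    then have "u *\<^sub>R pmap P x + v *\<^sub>R pmap P y \<in> K" using convexD[OF K] by simp
    then show "u *\<^sub>R x + v *\<^sub>R y \<in> {w. pmap P w \<in> K}"
      using pmap_comb[of u v P x y] \<open>u + v = 1\<close> by simp
  qed
  have "cset (kd P) \<subseteq> convex hull ?H"
  proof
    fix y assume "y \<in> cset (kd P)"
    then show "y \<in> convex hull ?H" using Pe c p0 arc_hull[of k p q "fst y" "snd y"]
      by (cases y) (auto simp: kd_def)
  qed
  also have "\<dots> \<subseteq> {w. pmap P w \<in> K}" using HK cvx by (rule hull_minimal)
  finally show ?thesis unfolding pset_def by blast
qed

lemma arcp_cover:
  fixes z w :: real
  assumes k0: "0 < k" and a: "l1 \<le> z" "z \<le> h1" "l2 \<le> w" "w \<le> h2" and zw: "z*w = k" and z0: "0 < z"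
  shows "\<exists>P\<in>set (arcp v e e' k l1 h1 l2 h2). v + z *\<^sub>R e + w *\<^sub>R e' \<in> pset P"
proof -
  define p where "p = max l1 (k/h2)"
  define q where "q = (if l2 > 0 then min h1 (k/l2) else h1)"
  have w0: "0 < w" using k0 zw z0 by (metis zero_less_mult_pos)
  have h2: "0 < h2" using w0 a by simp
  have "k/h2 \<le> z"
  proof -
    have "k \<le> z*h2" using zw a(4) z0 by (metis mult_left_mono less_imp_le)
    then show ?thesis using h2 by (simp add: divide_le_eq)
  qed
  then have pz: "p \<le> z" unfolding p_def using a by simp
  have zq: "z \<le> q"
  proof (cases "l2 > 0")
    case True
    have "z*l2 \<le> k" using zw a(3) z0 by (metis mult_left_mono less_imp_le)
    then have "z \<le> k/l2" using True by (simp add: le_divide_eq)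
    then show ?thesis unfolding q_def using True a by simp
  next
    case False
    then show ?thesis unfolding q_def using a by simp
  qed
  have ch: "k * z + p*q*w \<le> k*(p+q)"
  proof -
    have "(z-p)*(z-q) \<le> 0" using pz zq by (simp add: mult_nonneg_nonpos)
    then have "z*z + p*q \<le> (p+q)*z" by (simp add: algebra_simps)
    then have "w*(z*z + p*q) \<le> w*((p+q)*z)" using w0 by (simp add: mult_left_mono)
    moreover have "w*(z*z + p*q) = (z*w)*z + p*q*w" by (simp add: algebra_simps)
    moreover have "w*((p+q)*z) = (z*w)*(p+q)" by (simp add: algebra_simps)
    ultimately have "(z*w)*z + p*q*w \<le> (z*w)*(p+q)" by simp
    then show ?thesis unfolding zw by (simp add: mult.commute)
  qed
  have mem: "(z,w) \<in> cset (Arc k p q)" using pz zq ch zw w0 by simp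
  have L: "arcp v e e' k l1 h1 l2 h2 = [(v,e,e',Arc k p q)]"
    unfolding arcp_def Let_def p_def[symmetric] q_def[symmetric] using k0 h2 pz zq by simp
  have "v + z *\<^sub>R e + w *\<^sub>R e' = pmap (v,e,e',Arc k p q) (z,w)" by (simp add: pmap_def vv_def ee_def ee'_def)
  then have "v + z *\<^sub>R e + w *\<^sub>R e' \<in> pset (v,e,e',Arc k p q)" unfolding pset_def kd_def using mem by simp
  then show ?thesis unfolding L by simp
qed


definition axX :: "'n::finite \<Rightarrow> (real^'n) \<times> (real^'n)" where "axX i = (axis i 1, 0)"
definition axY :: "'n::finite \<Rightarrow> (real^'n) \<times> (real^'n)" where "axY i = (0, axis i 1)"

definition vtx :: "real^'n \<Rightarrow> real^'n \<Rightarrow> real^'n \<Rightarrow> real^'n \<Rightarrow> 'n \<Rightarrow> ('n \<Rightarrow> bool) \<Rightarrow> ('n \<Rightarrow> bool) \<Rightarrow> (real^'n) \<times> (real^'n)" where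
  "vtx xl xu yl yu i fx fy = ((\<chi> l. if l = i then 0 else if fx l then xu$l else xl$l),
                            (\<chi> l. if l = i then 0 else if fy l then yu$l else yl$l))"

definition kval :: "real^'n \<Rightarrow> (real^'n) \<times> (real^'n) \<Rightarrow> 'n \<Rightarrow> real" where
  "kval a v i = - (\<Sum>l\<in>UNIV. a$l * fst v $ l * snd v $ l) / a$i"

definition mkp :: "real^'n \<Rightarrow> real^'n \<Rightarrow> real^'n \<Rightarrow> real^'n \<Rightarrow> real^'n \<Rightarrow> 'n \<Rightarrow> ('n \<Rightarrow> bool) \<Rightarrow> ('n \<Rightarrow> bool)
     \<Rightarrow> (((real^'n) \<times> (real^'n)) \<times> ((real^'n) \<times> (real^'n)) \<times> ((real^'n) \<times> (real^'n)) \<times> pk) list" where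
  "mkp a xl xu yl yu i fx fy = (let v = vtx xl xu yl yu i fx fy; k = kval a v i;
      lx = xl$i; hx = xu$i; ly = yl$i; hy = yu$i in
   (if k = 0 then [(v, axX i, axY i, Box (max lx 0) (min hx 0) ly hy), (v, axX i, axY i, Box lx hx (max ly 0) (min hy 0))] else [])
   @ arcp v (axX i) (axY i) k lx hx ly hy
   @ arcp v (axX i) (- axY i) (-k) lx hx (-hy) (-ly)
   @ arcp v (- axX i) (axY i) (-k) (-hx) (-lx) ly hy
   @ arcp v (- axX i) (- axY i) k (-hx) (-lx) (-hy) (-ly))"

lemma sum_split:
  fixes a :: "real^'n"
  shows "(\<Sum>l\<in>UNIV. a$l * fst (vtx xl xu yl yu i fx fy + s *\<^sub>R axX i + t *\<^sub>R axY i) $ l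
                        * snd (vtx xl xu yl yu i fx fy + s *\<^sub>R axX i + t *\<^sub>R axY i) $ l)
     = (\<Sum>l\<in>UNIV. a$l * fst (vtx xl xu yl yu i fx fy) $ l * snd (vtx xl xu yl yu i fx fy) $ l) + a$i * s * t"
proof -
  have "(\<Sum>l\<in>UNIV. a$l * fst (vtx xl xu yl yu i fx fy + s *\<^sub>R axX i + t *\<^sub>R axY i) $ l
                        * snd (vtx xl xu yl yu i fx fy + s *\<^sub>R axX i + t *\<^sub>R axY i) $ l)
     = (\<Sum>l\<in>UNIV. a$l * fst (vtx xl xu yl yu i fx fy) $ l * snd (vtx xl xu yl yu i fx fy) $ l
          + (if l = i then a$i * s * t else 0))"
    by (rule sum.cong) (auto simp: vtx_def axX_def axY_def axis_def)
  also have "\<dots> = (\<Sum>l\<in>UNIV. a$l * fst (vtx xl xu yl yu i fx fy) $ l * snd (vtx xl xu yl yu i fx fy) $ l) + a$i * s * t"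
    by (simp add: sum.distrib)
  finally show ?thesis .
qed

lemma slice_S:
  fixes a xl xu yl yu :: "real^'n"
  assumes a: "a$i \<noteq> 0" and bx: "\<forall>l. xl$l < xu$l" and by': "\<forall>l. yl$l < yu$l"
    and s: "xl$i \<le> s" "s \<le> xu$i" "yl$i \<le> t" "t \<le> yu$i"
    and st: "s*t = kval a (vtx xl xu yl yu i fx fy) i"
  shows "vtx xl xu yl yu i fx fy + s *\<^sub>R axX i + t *\<^sub>R axY i \<in> Sset a xl xu yl yu"
proof -
  let ?p = "vtx xl xu yl yu i fx fy + s *\<^sub>R axX i + t *\<^sub>R axY i"
  have c1: "fst ?p $ l = (if l = i then s else if fx l then xu$l else xl$l)" for l
    by (simp add: vtx_def axX_def axY_def axis_def)
  have c2: "snd ?p $ l = (if l = i then t else if fy l then yu$l else yl$l)" for l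
    by (simp add: vtx_def axX_def axY_def axis_def)
  have b1: "xl$l \<le> fst ?p $ l \<and> fst ?p $ l \<le> xu$l" for l
    unfolding c1 using bx s by (auto simp: less_imp_le)
  have b2: "yl$l \<le> snd ?p $ l \<and> snd ?p $ l \<le> yu$l" for l
    unfolding c2 using by' s by (auto simp: less_imp_le)
  have "a$i * s * t = - (\<Sum>l\<in>UNIV. a$l * fst (vtx xl xu yl yu i fx fy) $ l * snd (vtx xl xu yl yu i fx fy) $ l)"
    using st a unfolding kval_def by (simp add: field_simps)
  then have "(\<Sum>l\<in>UNIV. a$l * fst ?p $ l * snd ?p $ l) = 0" unfolding sum_split by simp
  then show ?thesis unfolding Sset_def using b1 b2 by (simp add: split_beta)
qed

lemma box_sub:
  fixes a xl xu yl yu :: "real^'n"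
  assumes a: "a$i \<noteq> 0" and bx: "\<forall>l. xl$l < xu$l" and by': "\<forall>l. yl$l < yu$l"
    and P: "P \<in> set (mkp a xl xu yl yu i fx fy)"
  shows "pset P \<subseteq> convex hull (Sset a xl xu yl yu)"
proof -
  define v where "v = vtx xl xu yl yu i fx fy"
  define k where "k = kval a v i"
  have pt: "v + s *\<^sub>R axX i + t *\<^sub>R axY i \<in> convex hull (Sset a xl xu yl yu)"
    if "xl$i \<le> s" "s \<le> xu$i" "yl$i \<le> t" "t \<le> yu$i" "s*t = k" for s t
    using slice_S[OF a bx by' that[unfolded k_def v_def]] unfolding v_def by (rule hull_inc)
  have K: "convex (convex hull (Sset a xl xu yl yu))" by simp
  have "P \<in> set (if k = 0 then [(v, axX i, axY i, Box (max (xl$i) 0) (min (xu$i) 0) (yl$i) (yu$i)),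
           (v, axX i, axY i, Box (xl$i) (xu$i) (max (yl$i) 0) (min (yu$i) 0))] else [])
     \<or> P \<in> set (arcp v (axX i) (axY i) k (xl$i) (xu$i) (yl$i) (yu$i))
     \<or> P \<in> set (arcp v (axX i) (- axY i) (-k) (xl$i) (xu$i) (-yu$i) (-yl$i))
     \<or> P \<in> set (arcp v (- axX i) (axY i) (-k) (-xu$i) (-xl$i) (yl$i) (yu$i))
     \<or> P \<in> set (arcp v (- axX i) (- axY i) k (-xu$i) (-xl$i) (-yu$i) (-yl$i))"
    using P unfolding mkp_def Let_def v_def[symmetric] k_def[symmetric] by auto
  then show ?thesis
  proof (elim disjE)
    assume "P \<in> set (if k = 0 then [(v, axX i, axY i, Box (max (xl$i) 0) (min (xu$i) 0) (yl$i) (yu$i)),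
           (v, axX i, axY i, Box (xl$i) (xu$i) (max (yl$i) 0) (min (yu$i) 0))] else [])"
    then have k0: "k = 0" and P2: "P = (v, axX i, axY i, Box (max (xl$i) 0) (min (xu$i) 0) (yl$i) (yu$i))
        \<or> P = (v, axX i, axY i, Box (xl$i) (xu$i) (max (yl$i) 0) (min (yu$i) 0))"
      by (auto split: if_splits)
    show ?thesis
    proof
      fix x assume "x \<in> pset P"
      then obtain s t where st: "(s,t) \<in> cset (kd P)" and x: "x = pmap P (s,t)" unfolding pset_def by auto
      from P2 show "x \<in> convex hull (Sset a xl xu yl yu)"
      proof
        assume Pe: "P = (v, axX i, axY i, Box (max (xl$i) 0) (min (xu$i) 0) (yl$i) (yu$i))"
        then have "s = 0" "xl$i \<le> s" "s \<le> xu$i" "yl$i \<le> t" "t \<le> yu$i" using st by (auto simp: kd_def)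
        then show ?thesis using pt[of s t] k0 x Pe by (simp add: pmap_def vv_def ee_def ee'_def)
      next
        assume Pe: "P = (v, axX i, axY i, Box (xl$i) (xu$i) (max (yl$i) 0) (min (yu$i) 0))"
        then have "t = 0" "xl$i \<le> s" "s \<le> xu$i" "yl$i \<le> t" "t \<le> yu$i" using st by (auto simp: kd_def)
        then show ?thesis using pt[of s t] k0 x Pe by (simp add: pmap_def vv_def ee_def ee'_def)
      qed
    qed
  next
    assume "P \<in> set (arcp v (axX i) (axY i) k (xl$i) (xu$i) (yl$i) (yu$i))"
    then show ?thesis using K by (rule arcp_sub) (use pt in auto)
  next
    assume "P \<in> set (arcp v (axX i) (- axY i) (-k) (xl$i) (xu$i) (-yu$i) (-yl$i))"
    then show ?thesis using K
    proof (rule arcp_sub)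
      fix z w assume h: "xl$i \<le> z" "z \<le> xu$i" "-yu$i \<le> w" "w \<le> -yl$i" "z*w = -k"
      have "v + z *\<^sub>R axX i + (-w) *\<^sub>R axY i \<in> convex hull (Sset a xl xu yl yu)" using h by (intro pt) auto
      then show "v + z *\<^sub>R axX i + w *\<^sub>R - axY i \<in> convex hull (Sset a xl xu yl yu)" by simp
    qed
  next
    assume "P \<in> set (arcp v (- axX i) (axY i) (-k) (-xu$i) (-xl$i) (yl$i) (yu$i))"
    then show ?thesis using K
    proof (rule arcp_sub)
      fix z w assume h: "-xu$i \<le> z" "z \<le> -xl$i" "yl$i \<le> w" "w \<le> yu$i" "z*w = -k"
      have "v + (-z) *\<^sub>R axX i + w *\<^sub>R axY i \<in> convex hull (Sset a xl xu yl yu)" using h by (intro pt) auto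
      then show "v + z *\<^sub>R - axX i + w *\<^sub>R axY i \<in> convex hull (Sset a xl xu yl yu)" by simp
    qed
  next
    assume "P \<in> set (arcp v (- axX i) (- axY i) k (-xu$i) (-xl$i) (-yu$i) (-yl$i))"
    then show ?thesis using K
    proof (rule arcp_sub)
      fix z w assume h: "-xu$i \<le> z" "z \<le> -xl$i" "-yu$i \<le> w" "w \<le> -yl$i" "z*w = k"
      have "v + (-z) *\<^sub>R axX i + (-w) *\<^sub>R axY i \<in> convex hull (Sset a xl xu yl yu)" using h by (intro pt) auto
      then show "v + z *\<^sub>R - axX i + w *\<^sub>R - axY i \<in> convex hull (Sset a xl xu yl yu)" by simp
    qed
  qed
qed
lemma cover:
  fixes a xl xu yl yu X Y :: "real^'n"
  assumes a: "a$i \<noteq> 0" and inS: "(X,Y) \<in> Sset a xl xu yl yu"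
    and bd: "\<forall>l. l \<noteq> i \<longrightarrow> (X$l = xl$l \<or> X$l = xu$l) \<and> (Y$l = yl$l \<or> Y$l = yu$l)"
  shows "\<exists>fx fy. \<exists>P\<in>set (mkp a xl xu yl yu i fx fy). (X,Y) \<in> pset P"
proof -
  define fx where "fx l = (X$l = xu$l)" for l
  define fy where "fy l = (Y$l = yu$l)" for l
  define v where "v = vtx xl xu yl yu i fx fy"
  define k where "k = kval a v i"
  define s where "s = X$i"
  define t where "t = Y$i"
  have XY: "(X,Y) = v + s *\<^sub>R axX i + t *\<^sub>R axY i"
    using bd unfolding v_def vtx_def axX_def axY_def s_def t_def fx_def fy_def
    by (auto simp: vec_eq_iff axis_def)
  have sb: "xl$i \<le> s" "s \<le> xu$i" "yl$i \<le> t" "t \<le> yu$i" using inS unfolding s_def t_def Sset_def by auto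
  have "(\<Sum>l\<in>UNIV. a$l * X$l * Y$l) = 0" using inS unfolding Sset_def by auto
  then have "(\<Sum>l\<in>UNIV. a$l * fst v $ l * snd v $ l) + a$i * s * t = 0"
    using sum_split[of a xl xu yl yu i fx fy s t] XY unfolding v_def by (metis fst_conv snd_conv)
  then have stk: "s*t = k" unfolding k_def kval_def using a by (simp add: field_simps)
  have pm: "pmap (v, e, e', pc) (z,w) = v + z *\<^sub>R e + w *\<^sub>R e'" for e e' pc z w
    by (simp add: pmap_def vv_def ee_def ee'_def)
  have "\<exists>P\<in>set (mkp a xl xu yl yu i fx fy). v + s *\<^sub>R axX i + t *\<^sub>R axY i \<in> pset P"
  proof (cases "k = 0")
    case True
    then have "s = 0 \<or> t = 0" using stk by simp
    then show ?thesis
    proof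
      assume s0: "s = 0"
      let ?P = "(v, axX i, axY i, Box (max (xl$i) 0) (min (xu$i) 0) (yl$i) (yu$i))"
      have "?P \<in> set (mkp a xl xu yl yu i fx fy)" using True unfolding mkp_def Let_def v_def[symmetric] k_def[symmetric] by simp
      moreover have "(s,t) \<in> cset (kd ?P)" using s0 sb by (simp add: kd_def)
      then have "v + s *\<^sub>R axX i + t *\<^sub>R axY i \<in> pset ?P" unfolding pset_def using pm
        by (metis image_eqI)
      ultimately show ?thesis by blast
    next
      assume t0: "t = 0"
      let ?P = "(v, axX i, axY i, Box (xl$i) (xu$i) (max (yl$i) 0) (min (yu$i) 0))"
      have "?P \<in> set (mkp a xl xu yl yu i fx fy)" using True unfolding mkp_def Let_def v_def[symmetric] k_def[symmetric] by simp
      moreover have "(s,t) \<in> cset (kd ?P)" using t0 sb by (simp add: kd_def)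
      then have "v + s *\<^sub>R axX i + t *\<^sub>R axY i \<in> pset ?P" unfolding pset_def using pm
        by (metis image_eqI)
      ultimately show ?thesis by blast
    qed
  next
    case False
    then have s0: "s \<noteq> 0" and t0: "t \<noteq> 0" using stk by auto
    have sets: "set (arcp v (axX i) (axY i) k (xl$i) (xu$i) (yl$i) (yu$i)) \<subseteq> set (mkp a xl xu yl yu i fx fy)"
       "set (arcp v (axX i) (- axY i) (-k) (xl$i) (xu$i) (-yu$i) (-yl$i)) \<subseteq> set (mkp a xl xu yl yu i fx fy)"
       "set (arcp v (- axX i) (axY i) (-k) (-xu$i) (-xl$i) (yl$i) (yu$i)) \<subseteq> set (mkp a xl xu yl yu i fx fy)"
       "set (arcp v (- axX i) (- axY i) k (-xu$i) (-xl$i) (-yu$i) (-yl$i)) \<subseteq> set (mkp a xl xu yl yu i fx fy)"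
      unfolding mkp_def Let_def v_def[symmetric] k_def[symmetric] by auto
    consider "s > 0" "t > 0" | "s > 0" "t < 0" | "s < 0" "t > 0" | "s < 0" "t < 0" using s0 t0 by argo
    then show ?thesis
    proof cases
      case 1
      have "0 < k" using 1 stk by (metis mult_pos_pos)
      from arcp_cover[OF this sb stk 1(1), of v "axX i" "axY i"] sets(1) show ?thesis by blast
    next
      case 2
      have "0 < -k" using 2 stk by (metis mult_pos_neg neg_0_less_iff_less)
      have e: "s*(-t) = -k" using stk by simp
      from arcp_cover[OF \<open>0 < -k\<close> sb(1,2) _ _ e 2(1), of "-yu$i" "-yl$i" v "axX i" "- axY i"] sb sets(2)
      show ?thesis by auto
    next
      case 3
      have "0 < -k" using 3 stk by (metis mult_neg_pos neg_0_less_iff_less)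
      have e: "(-s)*t = -k" using stk by simp
      from arcp_cover[OF \<open>0 < -k\<close> _ _ sb(3,4) e, of "-xu$i" "-xl$i" v "- axX i" "axY i"] 3 sb sets(3)
      show ?thesis by auto
    next
      case 4
      have "0 < k" using 4 stk by (metis mult_neg_neg)
      have e: "(-s)*(-t) = k" using stk by simp
      from arcp_cover[OF \<open>0 < k\<close> _ _ _ _ e, of "-xu$i" "-xl$i" "-yu$i" "-yl$i" v "- axX i" "- axY i"] 4 sb sets(4)
      show ?thesis by auto
    qed
  qed
  then show ?thesis using XY by metis
qed

lemma ext_bd:
  fixes a xl xu yl yu X Y :: "real^'n"
  assumes ext: "(X,Y) extreme_point_of convex hull (Sset a xl xu yl yu)"
  shows "\<exists>i. \<forall>l. l \<noteq> i \<longrightarrow> (X$l = xl$l \<or> X$l = xu$l) \<and> (Y$l = yl$l \<or> Y$l = yu$l)"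
proof (rule ccontr)
  have inS: "(X,Y) \<in> Sset a xl xu yl yu" using ext extreme_point_of_convex_hull by blast
  have fv: "\<not> ((X$l = xl$l \<or> X$l = xu$l) \<and> (Y$l = yl$l \<or> Y$l = yu$l)) \<Longrightarrow> \<exists>b. freev xl xu yl yu X Y l b" for l
  proof -
    assume n: "\<not> ((X$l = xl$l \<or> X$l = xu$l) \<and> (Y$l = yl$l \<or> Y$l = yu$l))"
    have "xl$l \<le> X$l \<and> X$l \<le> xu$l" "yl$l \<le> Y$l \<and> Y$l \<le> yu$l" using inS unfolding Sset_def by auto
    then show ?thesis using n unfolding freev_def by (metis order_le_less)
  qed
  assume "\<not> ?thesis"
  then have h: "\<forall>i. \<exists>l. l \<noteq> i \<and> \<not> ((X$l = xl$l \<or> X$l = xu$l) \<and> (Y$l = yl$l \<or> Y$l = yu$l))" by blast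
  obtain l1 where "\<not> ((X$l1 = xl$l1 \<or> X$l1 = xu$l1) \<and> (Y$l1 = yl$l1 \<or> Y$l1 = yu$l1))" using h by blast
  then obtain b1 where f1: "freev xl xu yl yu X Y l1 b1" using fv by blast
  obtain l2 where "l2 \<noteq> l1" "\<not> ((X$l2 = xl$l2 \<or> X$l2 = xu$l2) \<and> (Y$l2 = yl$l2 \<or> Y$l2 = yu$l2))" using h by blast
  moreover then obtain b2 where f2: "freev xl xu yl yu X Y l2 b2" using fv by blast
  ultimately show False using no_two_free[OF inS ext _ f1 f2] by metis
qed
lemma mkp_valid: "P \<in> set (mkp a xl xu yl yu i fx fy) \<Longrightarrow> valid (kd P)"
  unfolding mkp_def Let_def by (auto simp: kd_def split: if_splits dest: arcp_valid)

lemma Sset_compact: "compact (Sset a xl xu yl yu)"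
proof -
  have e: "Sset a xl xu yl yu = {p. (\<Sum>i\<in>UNIV. a$i * fst p $ i * snd p $ i) = 0} \<inter> cbox (xl,yl) (xu,yu)"
    by (auto simp: Sset_def cbox_Pair_eq mem_box_cart)
  have "closed {p :: (real^'a) \<times> (real^'a). (\<Sum>i\<in>UNIV. a$i * fst p $ i * snd p $ i) = 0}"
    by (intro closed_Collect_eq continuous_intros)
  then have "closed (Sset a xl xu yl yu)" unfolding e by (intro closed_Int closed_cbox)
  moreover have "bounded (Sset a xl xu yl yu)" unfolding e by (intro bounded_Int) (simp add: bounded_cbox)
  ultimately show ?thesis by (simp add: compact_eq_bounded_closed)
qed

theorem theorem2:
  fixes a xl xu yl yu :: "real ^ 'n"
  assumes "\<forall>i. a $ i \<noteq> 0"
    and "\<forall>i. xl $ i < xu $ i"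
    and "\<forall>i. yl $ i < yu $ i"
  shows "soc_representable
           (convex hull {(x :: real ^ 'n, y :: real ^ 'n).
              (\<Sum>i\<in>UNIV. a $ i * x $ i * y $ i) = 0
              \<and> (\<forall>i. xl $ i \<le> x $ i \<and> x $ i \<le> xu $ i)
              \<and> (\<forall>i. yl $ i \<le> y $ i \<and> y $ i \<le> yu $ i)})"
proof -
  have Seq: "{(x :: real ^ 'n, y :: real ^ 'n).
              (\<Sum>i\<in>UNIV. a $ i * x $ i * y $ i) = 0
              \<and> (\<forall>i. xl $ i \<le> x $ i \<and> x $ i \<le> xu $ i)
              \<and> (\<forall>i. yl $ i \<le> y $ i \<and> y $ i \<le> yu $ i)} = Sset a xl xu yl yu" unfolding Sset_def by simp
  define S where "S = Sset a xl xu yl yu"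
  obtain il :: "('n \<times> ('n \<Rightarrow> bool) \<times> ('n \<Rightarrow> bool)) list" where il: "set il = UNIV"
    using finite_list[OF finite_class.finite_UNIV] by blast
  define ps where "ps = filter (\<lambda>P. cset (kd P) \<noteq> {}) (concat (map (\<lambda>(i,fx,fy). mkp a xl xu yl yu i fx fy) il))"
  have mem: "\<exists>i fx fy. P \<in> set (mkp a xl xu yl yu i fx fy)" and ne: "cset (kd P) \<noteq> {}" if "P \<in> set ps" for P
    using that unfolding ps_def by auto
  have R1: "\<forall>P\<in>set ps. valid (kd P) \<and> convex (cset (kd P)) \<and> cset (kd P) \<noteq> {}"
    using mem ne mkp_valid convex_cset by blast
  have R2: "pset P \<subseteq> convex hull S" if "P \<in> set ps" for P
    using mem[OF that] box_sub assms unfolding S_def by blast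
  have R3: "{x. x extreme_point_of convex hull S} \<subseteq> (\<Union>P\<in>set ps. pset P)"
  proof
    fix x assume "x \<in> {x. x extreme_point_of convex hull S}"
    then have ext: "x extreme_point_of convex hull S" by simp
    obtain X Y where xXY: "x = (X,Y)" by (cases x)
    have inS: "(X,Y) \<in> S" using ext xXY extreme_point_of_convex_hull by blast
    obtain i where bd: "\<forall>l. l \<noteq> i \<longrightarrow> (X$l = xl$l \<or> X$l = xu$l) \<and> (Y$l = yl$l \<or> Y$l = yu$l)"
      using ext_bd ext xXY unfolding S_def by blast
    obtain fx fy P where P: "P \<in> set (mkp a xl xu yl yu i fx fy)" and xP: "(X,Y) \<in> pset P"
      using cover[OF _ inS[unfolded S_def] bd] assms by blast
    have "cset (kd P) \<noteq> {}" using xP unfolding pset_def by auto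
    moreover have "(i,fx,fy) \<in> set il" using il by simp
    ultimately have "P \<in> set ps" unfolding ps_def using P by force
    then show "x \<in> (\<Union>P\<in>set ps. pset P)" using xP xXY by blast
  qed
  have cS: "compact (convex hull S)" unfolding S_def by (intro compact_convex_hull Sset_compact)
  have "convex hull S = convex hull {x. x extreme_point_of convex hull S}"
    using Krein_Milman_Minkowski[OF cS convex_convex_hull] .
  also have "\<dots> \<subseteq> convex hull (\<Union>P\<in>set ps. pset P)" using R3 by (rule hull_mono)
  finally have s1: "convex hull S \<subseteq> convex hull (\<Union>P\<in>set ps. pset P)" .
  have s2: "convex hull (\<Union>P\<in>set ps. pset P) \<subseteq> convex hull S"
  proof (rule hull_minimal)
    show "(\<Union>P\<in>set ps. pset P) \<subseteq> convex hull S" using R2 by blast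
  qed (rule convex_convex_hull)
  have "convex hull S = Wset ps" using s1 s2 W_eq[OF R1] by simp
  then show ?thesis unfolding Seq S_def[symmetric] using Wset_rep by simp
qed

end
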